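(* Let $k\ge 1$ and $s\ge 2$ be integers, let $a_s>a_{s-1}>\dots>a_1\ge 1$ be integers, and let $m_1,\dots,m_s\ge 1$ be integers with $m_1+\dots+m_s=k$ and $m_s=2h+1$ for some integer $h\ge 0$. Let $b$ be the multiset consisting of $m_i$ copies of $a_i$ for $i=1,\dots,s$. Suppose $a_s>\sum_{i=1}^{s-1}m_ia_i$. Consider the quadratic form $$q(x)=\frac{1}{2}\sum_{i=1}^k\sum_{j=1}^k|i-j|\,x_ix_j$$ over all vectors $x=(x_1,\dots,x_k)$ whose entries are a rearrangement of the multiset $b$. Then, up to reversal of the order of entries (which leaves $q$ unchanged), $q$ is uniquely maximized by $$x=(\underbrace{a_s,\dots,a_s}_{h+1},\underbrace{a_1,\dots,a_1}_{m_1},\underbrace{a_2,\dots,a_2}_{m_2},\dots,\underbrace{a_{s-1},\dots,a_{s-1}}_{m_{s-1}},\underbrace{a_s,\dots,a_s}_{h}),$$ i.e. $h+1$ copies of $a_s$, followed by all remaining entries of $b$ other than $a_s$ in nondecreasing order, followed by $h$ copies of $a_s$.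
   Context: Motivation: for a caterpillar tree $T$ of order $n$ whose non-leaf vertices $v_1,\dots,v_k$ lie in this order along the spine, the Wiener index (sum of distances over all unordered vertex pairs) equals $W(T)=(n-1)^2+q(x)$ with $x_i=\deg(v_i)-1$; the multiset $b$ plays the role of the decremented degree sequence (non-leaf degrees minus one). *)

theory Defs
  imports "HOL-Library.Multiset" Complex_Main
begin

text \<open>The quadratic form q(x) = 1/2 sum_i sum_j |i-j| x_i x_j for a vector x = (x_1,...,x_k),
  represented as a list of length k (0-based indices; |i-j| is unaffected by the shift).\<close>
definition qform :: "int list \<Rightarrow> real" where
  "qform xs = (1/2) * (\<Sum>i<length xs. \<Sum>j<length xs.
      real (if i \<le> j then j - i else i - j) * real_of_int (xs ! i) * real_of_int (xs ! j))"

definition bmset :: "nat \<Rightarrow> (nat \<Rightarrow> int) \<Rightarrow> (nat \<Rightarrow> nat) \<Rightarrow> int multiset" where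
  "bmset s a m = (\<Sum>i\<in>{1..s}. replicate_mset (m i) (a i))"

end

theory Submission
  imports Defs
begin

fun WW :: "int list \<Rightarrow> int" where
  "WW [] = 0" | "WW (x#xs) = sum_list (x#xs) + WW xs"
fun QQ :: "int list \<Rightarrow> int" where
  "QQ [] = 0" | "QQ (x#xs) = QQ xs + x * WW xs"

lemma WW_eq: "WW xs = (\<Sum>j<length xs. int (j+1) * xs!j)"
proof (induction xs)
  case Nil then show ?case by simp
next
  case (Cons x xs)
  have "(\<Sum>j<length (x#xs). int (j+1) * (x#xs)!j) = x + (\<Sum>j<length xs. int (j+2) * xs!j)"
    by (simp add: sum.lessThan_Suc_shift del: sum.lessThan_Suc)
  also have "\<dots> = x + (\<Sum>j<length xs. xs!j) + (\<Sum>j<length xs. int (j+1) * xs!j)"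
    by (simp add: algebra_simps sum.distrib sum_distrib_left)
  also have "\<dots> = sum_list (x#xs) + WW xs" using Cons by (simp add: sum_list_sum_nth[of xs] atLeast0LessThan)
  finally show ?case by simp
qed

lemma qform_Cons: "qform (x#xs) = qform xs + real_of_int x * real_of_int (WW xs)"
proof -
  define D where "D = (\<lambda>i j::nat. real (if i \<le> j then j - i else i - j))"
  define n where "n = length xs"
  have DS: "D (Suc i) (Suc j) = D i j" for i j by (simp add: D_def)
  have D0: "D 0 (Suc j) = real (j+1)" "D (Suc j) 0 = real (j+1)" "D 0 0 = 0" for j by (simp_all add: D_def)
  have "qform (x#xs) = (1/2) * (\<Sum>i<Suc n. \<Sum>j<Suc n. D i j * real_of_int ((x#xs) ! i) * real_of_int ((x#xs) ! j))"
    by (simp add: qform_def D_def n_def)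
  also have "\<dots> = (1/2) * ((\<Sum>j<n. real (j+1) * real_of_int x * real_of_int (xs!j))
       + ((\<Sum>i<n. real (i+1) * real_of_int (xs!i) * real_of_int x)
       + (\<Sum>i<n. \<Sum>j<n. D i j * real_of_int (xs ! i) * real_of_int (xs ! j))))"
    by (simp add: sum.lessThan_Suc_shift DS D0 sum.distrib del: sum.lessThan_Suc)
  also have "\<dots> = qform xs + real_of_int x * (\<Sum>j<n. real (j+1) * real_of_int (xs!j))"
    by (simp add: qform_def D_def n_def sum_distrib_left algebra_simps)
  also have "(\<Sum>j<n. real (j+1) * real_of_int (xs!j)) = real_of_int (WW xs)"
    by (simp add: WW_eq n_def)
  finally show ?thesis .
qed

lemma qform_QQ: "qform xs = real_of_int (QQ xs)"
  by (induction xs) (simp_all only: qform_Cons, simp_all add: qform_def)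

lemma qform_rev: "qform (rev xs) = qform xs"
proof -
  define n where "n = length xs"
  have "qform (rev xs) = (1/2) * (\<Sum>i<n. \<Sum>j<n.
      real (if n - Suc i \<le> n - Suc j then (n - Suc j) - (n - Suc i) else (n - Suc i) - (n - Suc j)) * real_of_int (xs ! (n - Suc i)) * real_of_int (xs ! (n - Suc j)))"
    unfolding qform_def n_def
    by (intro arg_cong[where f="\<lambda>t. (1/2) * t"] sum.cong refl) (auto simp: rev_nth)
  also have "\<dots> = qform xs"
    unfolding qform_def n_def[symmetric]
    by (subst sum.nat_diff_reindex[symmetric, of _ n], rule arg_cong[where f="\<lambda>t. (1/2) * t"], rule sum.cong, rule refl,
        subst sum.nat_diff_reindex, simp)
  finally show ?thesis .
qed

lemma WW_app: "sum_list z1 = sum_list z2 \<Longrightarrow> WW (u@z1) - WW (u@z2) = WW z1 - WW z2"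
  by (induction u) auto

lemma QQ_app: "sum_list z1 = sum_list z2 \<Longrightarrow> QQ (u@z1) - QQ (u@z2) = QQ z1 - QQ z2 + sum_list u * (WW z1 - WW z2)"
proof (induction u)
  case Nil then show ?case by simp
next
  case (Cons a u)
  have "QQ ((a#u)@z1) - QQ ((a#u)@z2) = (QQ (u@z1) - QQ (u@z2)) + a * (WW (u@z1) - WW (u@z2))"
    by (simp add: algebra_simps)
  then show ?case using Cons WW_app[OF Cons.prems, of u] by (simp add: algebra_simps)
qed

lemma QQ_swap: "QQ (u @ x # y # v) - QQ (u @ y # x # v) = (x - y) * (sum_list v - sum_list u)"
  using QQ_app[of "x#y#v" "y#x#v" u] by (simp add: algebra_simps)

definition good :: "int \<Rightarrow> nat \<Rightarrow> int list \<Rightarrow> bool" where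
"good A h xs \<longleftrightarrow> (\<forall>u x y v. xs = u @ x # y # v \<longrightarrow> (y - x) * (sum_list v - sum_list u) \<le> 0)
   \<and> count (mset xs) A = 2*h+1 \<and> (\<forall>w\<in>set xs. w \<noteq> A \<longrightarrow> 0 < w \<and> w < A)
   \<and> sum_list xs < (2*int h+2)*A \<and> (\<exists>w\<in>set xs. w \<noteq> A)"

lemma goodD: "good A h xs \<Longrightarrow> xs = u @ x # y # v \<Longrightarrow> (y - x) * (sum_list v - sum_list u) \<le> 0"
  unfolding good_def by blast

lemma good_rev: assumes "good A h xs" shows "good A h (rev xs)"
proof -
  have "(y - x) * (sum_list v - sum_list u) \<le> 0" if "rev xs = u @ x # y # v" for u x y v
  proof -
    have "rev (rev xs) = rev (u @ x # y # v)" using that by simp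
    hence "xs = rev v @ y # x # rev u" by simp
    from goodD[OF assms this] show ?thesis by (simp add: algebra_simps)
  qed
  then show ?thesis using assms unfolding good_def by simp
qed

lemma good_pos: assumes "good A h xs" shows "0 < A"
proof -
  obtain w where "w \<in> set xs" "w \<noteq> A" using assms unfolding good_def by blast
  hence "0 < w \<and> w < A" using assms unfolding good_def by blast
  thus ?thesis by simp
qed

lemma good_pos_elem: assumes "good A h xs" "w \<in> set xs" shows "0 < w"
proof (cases "w = A")
  case True thus ?thesis using good_pos[OF assms(1)] by simp
next
  case False thus ?thesis using assms unfolding good_def by blast
qed

lemma good_elem: "good A h xs \<Longrightarrow> w \<in> set xs \<Longrightarrow> w \<noteq> A \<Longrightarrow> 0 < w \<and> w < A"
  unfolding good_def by blast

lemma aux1: "(c::int) > 0 \<Longrightarrow> c*d \<le> 0 \<Longrightarrow> d \<le> 0"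
  by (simp add: mult_le_0_iff)
lemma aux2: "(c::int) < 0 \<Longrightarrow> c*d \<le> 0 \<Longrightarrow> d \<ge> 0"
  by (simp add: mult_le_0_iff)

lemma replicate_takeWhile: "takeWhile (\<lambda>x. x = A) xs = replicate (length (takeWhile (\<lambda>x. x = A) xs)) A"
  by (metis (mono_tags) replicate_length_same set_takeWhileD)

lemma good_decomp:
  assumes g: "good A h xs"
  shows "\<exists>\<alpha> \<beta> W. xs = replicate \<alpha> A @ W @ replicate \<beta> A \<and> A \<notin> set W \<and> W \<noteq> []"
proof -
  define \<alpha> where "\<alpha> = length (takeWhile (\<lambda>x. x = A) xs)"
  define ys where "ys = dropWhile (\<lambda>x. x = A) xs"
  define \<beta> where "\<beta> = length (takeWhile (\<lambda>x. x = A) (rev ys))"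
  define W where "W = rev (dropWhile (\<lambda>x. x = A) (rev ys))"
  have t1: "takeWhile (\<lambda>x. x = A) xs = replicate \<alpha> A" unfolding \<alpha>_def by (rule replicate_takeWhile)
  have xs: "xs = replicate \<alpha> A @ ys"
    unfolding ys_def t1[symmetric] by simp
  have t2: "takeWhile (\<lambda>x. x = A) (rev ys) = replicate \<beta> A" unfolding \<beta>_def by (rule replicate_takeWhile)
  have "rev ys = replicate \<beta> A @ rev W"
    unfolding W_def rev_rev_ident t2[symmetric] by simp
  hence "rev (rev ys) = rev (replicate \<beta> A @ rev W)" by simp
  hence ys: "ys = W @ replicate \<beta> A" by simp
  have xs2: "xs = replicate \<alpha> A @ W @ replicate \<beta> A" using xs ys by simp
  obtain w where w: "w \<in> set xs" "w \<noteq> A" using g unfolding good_def by blast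
  have Wne: "W \<noteq> []" using w xs2 by (cases W) auto
  have hdW: "hd W \<noteq> A"
  proof -
    have "ys \<noteq> []" using Wne ys by simp
    hence "hd ys \<noteq> A" unfolding ys_def using hd_dropWhile[of "\<lambda>x. x = A" xs] by blast
    thus ?thesis using ys Wne by simp
  qed
  have lastW: "last W \<noteq> A"
  proof -
    have "dropWhile (\<lambda>x. x = A) (rev ys) \<noteq> []" using Wne unfolding W_def by simp
    hence "hd (dropWhile (\<lambda>x. x = A) (rev ys)) \<noteq> A" using hd_dropWhile[of "\<lambda>x. x = A" "rev ys"] by blast
    thus ?thesis unfolding W_def by (simp add: last_rev)
  qed
  have "A \<notin> set W"
  proof
    assume "A \<in> set W"
    then obtain W1 W2 where W: "W = W1 @ A # W2" "A \<notin> set W1" by (meson split_list_first)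
    have "W1 \<noteq> []" using hdW W by auto
    then obtain W1' w1 where W1: "W1 = W1' @ [w1]" by (metis rev_exhaust)
    define r where "r = length (takeWhile (\<lambda>x. x = A) W2)"
    define W2' where "W2' = dropWhile (\<lambda>x. x = A) W2"
    have t3: "takeWhile (\<lambda>x. x = A) W2 = replicate r A" unfolding r_def by (rule replicate_takeWhile)
    have W2: "W2 = replicate r A @ W2'" unfolding W2'_def t3[symmetric] by simp
    have "W2' \<noteq> []"
    proof
      assume "W2' = []"
      hence "last W = A" using W W2 by (cases r) (auto simp: last_append)
      thus False using lastW by simp
    qed
    then obtain w2 rest where W2': "W2' = w2 # rest" by (cases W2') auto
    have w2A: "w2 \<noteq> A" using W2' W2'_def \<open>W2' \<noteq> []\<close> using hd_dropWhile[of "\<lambda>x. x = A" W2] by simp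
    have w1A: "w1 \<noteq> A" using W W1 by auto
    have w1s: "w1 \<in> set xs" and w2s: "w2 \<in> set xs" using xs2 W W1 W2 W2' by auto
    have w1p: "0 < w1" "w1 < A" and w2p: "0 < w2" "w2 < A" using good_elem[OF g w1s w1A] good_elem[OF g w2s w2A] by auto
    define Ra where "Ra = replicate \<alpha> A"
    define Rb where "Rb = replicate \<beta> A"
    have e1: "xs = (Ra @ W1') @ w1 # A # (replicate r A @ w2 # rest @ Rb)"
      using xs2 W W1 W2 W2' Ra_def Rb_def by simp
    have e2: "xs = (Ra @ W1' @ [w1] @ replicate r A) @ A # w2 # (rest @ Rb)"
      using xs2 W W1 W2 W2' Ra_def Rb_def by (simp add: replicate_app_Cons_same)
    have c1: "sum_list (replicate r A @ w2 # rest @ Rb) - sum_list (Ra @ W1') \<le> 0"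
      using aux1[OF _ goodD[OF g e1]] w1p by simp
    have c2: "sum_list (rest @ Rb) - sum_list (Ra @ W1' @ [w1] @ replicate r A) \<ge> 0"
      using aux2[OF _ goodD[OF g e2]] w2p by simp
    have "0 \<le> int r * A" using w1p by simp
    with c1 c2 w1p w2p show False by (simp add: sum_list_replicate)
  qed
  then show ?thesis using xs2 Wne by blast
qed

lemma good_bound:
  assumes g: "good A h xs" and xs: "xs = replicate \<alpha> A @ W @ replicate \<beta> A" and W: "W \<noteq> []" and AW: "A \<notin> set W"
  shows "\<alpha> \<le> h+1"
proof (rule ccontr)
  assume "\<not> \<alpha> \<le> h+1"
  hence al: "\<alpha> \<ge> h+2" by simp
  obtain w0 rest where W0: "W = w0 # rest" using W by (cases W) auto
  have A0: "0 < A" using good_pos[OF g] .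
  have e: "xs = replicate (\<alpha>-1) A @ A # w0 # (rest @ replicate \<beta> A)"
    using xs W0 al by (cases \<alpha>) (auto simp: replicate_app_Cons_same)
  have w0p: "0 < w0" using good_pos_elem[OF g] xs W0 by auto
  have "w0 < A"
  proof -
    have "w0 \<in> set xs" using xs W0 by auto
    moreover have "w0 \<noteq> A" using AW W0 by auto
    ultimately show ?thesis using g unfolding good_def by blast
  qed
  hence "sum_list (rest @ replicate \<beta> A) - sum_list (replicate (\<alpha>-1) A) \<ge> 0"
    using aux2[OF _ goodD[OF g e]] by simp
  hence c: "sum_list rest + int \<beta> * A \<ge> int (\<alpha>-1) * A" by (simp add: sum_list_replicate)
  have s: "sum_list xs < (2*int h+2)*A" using g unfolding good_def by simp
  have "sum_list xs = int \<alpha> * A + w0 + sum_list rest + int \<beta> * A" using xs W0 by (simp add: sum_list_replicate)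
  have m: "int (2*h+3) * A \<le> int (\<alpha> + (\<alpha> - 1)) * A"
    using al A0 by (intro mult_right_mono) auto
  have "int (\<alpha> + (\<alpha> - 1)) * A = int \<alpha> * A + int (\<alpha> - 1) * A" by (simp add: algebra_simps)
  with m c s \<open>sum_list xs = _\<close> w0p A0 show False by (simp add: algebra_simps)
qed

lemma good_sorted:
  assumes g: "good A h xs" and xs: "xs = replicate (h+1) A @ W @ replicate h A"
  shows "sorted W"
  unfolding sorted_iff_nth_Suc
proof (intro allI impI)
  fix i assume i: "Suc i < length W"
  define x y U V where "x = W!i" and "y = W!Suc i" and "U = replicate (h+1) A @ take i W"
    and "V = drop (Suc (Suc i)) W @ replicate h A"
  have "W = take i W @ x # y # drop (Suc (Suc i)) W"
    using i unfolding x_def y_def by (metis Cons_nth_drop_Suc Suc_lessD id_take_nth_drop)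
  hence e: "xs = U @ x # y # V" using xs U_def V_def by (metis append.assoc append_Cons)
  have A0: "0 < A" using good_pos[OF g] .
  have pos: "\<And>w. w \<in> set xs \<Longrightarrow> 0 < w" using good_pos_elem[OF g] .
  have "sum_list (take i W) \<ge> 0"
    by (rule sum_list_nonneg) (metis in_set_takeD pos xs Un_iff set_append less_le)
  hence sU: "sum_list U \<ge> int (h+1) * A" unfolding U_def by (simp add: sum_list_replicate algebra_simps)
  have xp: "0 < x" "0 < y" using pos e by auto
  have s: "sum_list xs < (2*int h+2)*A" using g unfolding good_def by simp
  have "sum_list xs = sum_list U + x + y + sum_list V" using e by simp
  hence "sum_list V - sum_list U < 0" using sU s xp by (simp add: algebra_simps)
  hence "y - x \<ge> 0" using goodD[OF g e] by (simp add: mult_le_0_iff)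
  thus "W!i \<le> W!Suc i" using x_def y_def by simp
qed

lemma good_char:
  assumes g: "good A h xs" and ms: "mset xs = mset (replicate (h+1) A @ mid @ replicate h A)"
    and smid: "sorted mid"
  shows "xs = replicate (h+1) A @ mid @ replicate h A \<or> xs = rev (replicate (h+1) A @ mid @ replicate h A)"
proof -
  obtain \<alpha> \<beta> W where xs: "xs = replicate \<alpha> A @ W @ replicate \<beta> A" and AW: "A \<notin> set W" and W: "W \<noteq> []"
    using good_decomp[OF g] by blast
  have "count (mset xs) A = \<alpha> + \<beta>" using xs AW by (simp add: count_eq_zero_iff)
  hence ab: "\<alpha> + \<beta> = 2*h+1" using g unfolding good_def by simp
  have a1: "\<alpha> \<le> h+1" using good_bound[OF g xs W AW] .
  have rxs: "rev xs = replicate \<beta> A @ rev W @ replicate \<alpha> A" using xs by simp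
  have b1: "\<beta> \<le> h+1" using good_bound[OF good_rev[OF g] rxs] W AW by simp
  show ?thesis
  proof (cases "\<alpha> = h+1")
    case True
    hence b: "\<beta> = h" using ab by simp
    have xs': "xs = replicate (h+1) A @ W @ replicate h A" using xs True b by simp
    have sW: "sorted W" using good_sorted[OF g xs'] .
    have "mset W = mset mid" using ms xs' by simp
    hence "W = mid" using properties_for_sort[OF _ sW, of mid] sorted_sort_id[OF smid] by simp
    thus ?thesis using xs' by simp
  next
    case False
    hence a: "\<alpha> = h" and b: "\<beta> = h+1" using ab a1 b1 by auto
    have rxs': "rev xs = replicate (h+1) A @ rev W @ replicate h A" using rxs a b by simp
    have sW: "sorted (rev W)" using good_sorted[OF good_rev[OF g] rxs'] .
    have "mset xs = mset (replicate h A @ W @ replicate (h+1) A)" using xs a b by simp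
    hence "mset (rev W) = mset mid" using ms by (simp add: algebra_simps)
    hence "rev W = mid" using properties_for_sort[OF _ sW, of mid] sorted_sort_id[OF smid] by simp
    hence "rev xs = replicate (h+1) A @ mid @ replicate h A" using rxs' by simp
    thus ?thesis by (metis rev_rev_ident)
  qed
qed

lemma max_good:
  assumes ms: "mset xs = mset (replicate (h+1) A @ mid @ replicate h A)"
    and AM: "A \<notin> set mid" and pm: "\<forall>w\<in>set mid. 0 < w \<and> w < A" and sm: "sum_list mid < A"
    and ne: "mid \<noteq> []"
    and mx: "\<And>ys. mset ys = mset xs \<Longrightarrow> qform ys \<le> qform xs"
  shows "good A h xs"
proof -
  have c1: "(y - x) * (sum_list v - sum_list u) \<le> 0" if "xs = u @ x # y # v" for u x y v
  proof -
    have "mset (u @ y # x # v) = mset xs" using that by simp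
    hence "qform (u @ y # x # v) \<le> qform xs" by (rule mx)
    hence "QQ (u @ y # x # v) \<le> QQ xs" by (simp add: qform_QQ)
    thus ?thesis using QQ_swap[of u x y v] that by (simp add: algebra_simps)
  qed
  have sx: "set xs = set (replicate (h+1) A @ mid @ replicate h A)" by (metis ms set_mset_mset)
  have c2: "count (mset xs) A = 2*h+1" using ms AM by (simp add: count_eq_zero_iff)
  have c3: "\<forall>w\<in>set xs. w \<noteq> A \<longrightarrow> 0 < w \<and> w < A" using sx pm by auto
  have "sum_list xs = sum_list (replicate (h+1) A @ mid @ replicate h A)" by (metis ms sum_mset_sum_list)
  hence c4: "sum_list xs < (2*int h+2)*A" using sm by (simp add: sum_list_replicate algebra_simps)
  obtain w where "w \<in> set mid" using ne by (cases mid) auto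
  hence c5: "\<exists>w\<in>set xs. w \<noteq> A" using sx AM by force
  show ?thesis unfolding good_def using c1 c2 c3 c4 c5 by blast
qed

lemma main_abstract:
  fixes A :: int and mid :: "int list" and h :: nat
  defines "xstar \<equiv> replicate (h+1) A @ mid @ replicate h A"
  assumes AM: "A \<notin> set mid" and pm: "\<forall>w\<in>set mid. 0 < w \<and> w < A" and sm: "sum_list mid < A"
    and ne: "mid \<noteq> []" and smid: "sorted mid"
  shows "\<forall>xs. mset xs = mset xstar \<longrightarrow> qform xs \<le> qform xstar
         \<and> (qform xs = qform xstar \<longrightarrow> xs = xstar \<or> xs = rev xstar)"
proof -
  define X where "X = {xs. mset xs = mset xstar}"
  have fin: "finite X"
  proof (rule finite_subset)
    show "X \<subseteq> {xs. set xs \<subseteq> set xstar \<and> length xs = length xstar}"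
      unfolding X_def by (auto dest: mset_eq_setD mset_eq_length)
    show "finite {xs. set xs \<subseteq> set xstar \<and> length xs = length xstar}"
      by (rule finite_lists_length_eq) simp
  qed
  have xX: "xstar \<in> X" unfolding X_def by simp
  define M where "M = Max (qform ` X)"
  have "M \<in> qform ` X" unfolding M_def using fin xX by (intro Max_in) auto
  then obtain xm where xm: "xm \<in> X" "qform xm = M" by blast
  have ge: "qform ys \<le> M" if "ys \<in> X" for ys unfolding M_def using fin that by (intro Max_ge) auto
  have opt: "xs = xstar \<or> xs = rev xstar" if xsX: "xs \<in> X" and q: "qform xs = M" for xs
  proof -
    have msx: "mset xs = mset xstar" using xsX X_def by simp
    have "good A h xs"
    proof (rule max_good[OF _ AM pm sm ne])
      show "mset xs = mset (replicate (h + 1) A @ mid @ replicate h A)" using msx xstar_def by simp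
      fix ys assume "mset ys = mset xs"
      hence "ys \<in> X" using msx X_def by simp
      thus "qform ys \<le> qform xs" using ge q by simp
    qed
    from good_char[OF this _ smid] msx show ?thesis unfolding xstar_def by simp
  qed
  have "qform xm = qform xstar"
    using opt[OF xm] qform_rev by auto
  hence M: "M = qform xstar" using xm by simp
  show ?thesis
  proof (intro allI impI conjI)
    fix xs assume "mset xs = mset xstar"
    hence xsX: "xs \<in> X" using X_def by simp
    show "qform xs \<le> qform xstar" using ge[OF xsX] M by simp
    assume "qform xs = qform xstar"
    thus "xs = xstar \<or> xs = rev xstar" using opt[OF xsX] M by simp
  qed
qed

lemma mono_a:
  assumes "\<And>i. 1 \<le> i \<Longrightarrow> i < s \<Longrightarrow> (a::nat\<Rightarrow>int) i < a (Suc i)"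
  shows "1 \<le> i \<Longrightarrow> i + Suc d \<le> s \<Longrightarrow> a i < a (i + Suc d)"
proof (induction d)
  case 0 then show ?case using assms by simp
next
  case (Suc d)
  then have "a i < a (i + Suc d)" by simp
  also have "\<dots> < a (Suc (i + Suc d))" using assms Suc.prems by simp
  finally show ?case by simp
qed

lemma mono_a2:
  assumes "\<And>i. 1 \<le> i \<Longrightarrow> i < s \<Longrightarrow> (a::nat\<Rightarrow>int) i < a (Suc i)"
    and "1 \<le> i" "i < j" "j \<le> s"
  shows "a i < a j"
  using mono_a[of s a i "j - i - 1", OF assms(1) assms(2)] assms(3,4) by simp

lemma set_mid: "x \<in> set (concat (map (\<lambda>i. replicate (m i) (a i)) [1..<n])) \<Longrightarrow> \<exists>i. 1 \<le> i \<and> i < n \<and> x = a i"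
  by auto

lemma sorted_mid:
  assumes "\<And>i j. 1 \<le> i \<Longrightarrow> i < j \<Longrightarrow> j < n \<Longrightarrow> (a::nat\<Rightarrow>int) i < a j"
  shows "sorted (concat (map (\<lambda>i. replicate (m i) (a i)) [1..<n]))"
  using assms
proof (induction n)
  case 0 then show ?case by simp
next
  case (Suc n)
  have IH: "sorted (concat (map (\<lambda>i. replicate (m i) (a i)) [1..<n]))"
    using Suc by simp
  show ?case
  proof (cases "n \<ge> 1")
    case True
    have "\<forall>x\<in>set (concat (map (\<lambda>i. replicate (m i) (a i)) [1..<n])). x \<le> a n"
      using Suc.prems by (fastforce dest: set_mid intro: less_imp_le)
    then show ?thesis using IH True by (auto simp: sorted_append)
  next
    case False
    then show ?thesis by simp
  qed
qed

lemma sum_mid: "sum_list (concat (map (\<lambda>i. replicate (m i) (a i)) [1..<n])) = (\<Sum>i=1..<n. int (m i) * (a i::int))"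
  by (induction n) (simp_all add: sum_list_replicate)

lemma mset_mid: "mset (concat (map (\<lambda>i. replicate (m i) (a i)) [1..<n])) = (\<Sum>i=1..<n. replicate_mset (m i) (a i))"
  by (induction n) (simp_all)

theorem theorem3p1:
  fixes k s h :: nat and a :: "nat \<Rightarrow> int" and m :: "nat \<Rightarrow> nat"
  assumes "k \<ge> 1" and "s \<ge> 2"
    and "a 1 \<ge> 1"
    and "\<And>i. 1 \<le> i \<Longrightarrow> i < s \<Longrightarrow> a i < a (Suc i)"
    and "\<And>i. 1 \<le> i \<Longrightarrow> i \<le> s \<Longrightarrow> m i \<ge> 1"
    and "(\<Sum>i=1..s. m i) = k"
    and "m s = 2 * h + 1"
    and "a s > (\<Sum>i=1..<s. int (m i) * a i)"
  defines "xstar \<equiv> replicate (h + 1) (a s)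
                   @ concat (map (\<lambda>i. replicate (m i) (a i)) [1..<s])
                   @ replicate h (a s)"
  shows "mset xstar = bmset s a m
     \<and> (\<forall>xs. mset xs = bmset s a m \<longrightarrow>
           qform xs \<le> qform xstar
         \<and> (qform xs = qform xstar \<longrightarrow> xs = xstar \<or> xs = rev xstar))"
proof -
  define mid where "mid = concat (map (\<lambda>i. replicate (m i) (a i)) [1..<s])"
  have mono: "\<And>i j. 1 \<le> i \<Longrightarrow> i < j \<Longrightarrow> j \<le> s \<Longrightarrow> a i < a j"
    using mono_a2[of s a, OF assms(4)] by blast
  have ms: "mset xstar = bmset s a m"
  proof -
    have "{1..s} = insert s {1..<s}" using assms(2) by auto
    hence "bmset s a m = replicate_mset (m s) (a s) + (\<Sum>i=1..<s. replicate_mset (m i) (a i))"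
      unfolding bmset_def by simp
    moreover have "mset mid = (\<Sum>i=1..<s. replicate_mset (m i) (a i))" unfolding mid_def by (rule mset_mid)
    moreover have "replicate_mset (m s) (a s) = replicate_mset (h+1) (a s) + replicate_mset h (a s)"
      using assms(7) by (simp add: multiset_eq_iff)
    ultimately show ?thesis unfolding xstar_def mid_def[symmetric] by (simp add: algebra_simps)
  qed
  have setm: "\<exists>i. 1 \<le> i \<and> i < s \<and> w = a i" if "w \<in> set mid" for w
    using that unfolding mid_def by (rule set_mid)
  have pos: "\<And>i. 1 \<le> i \<Longrightarrow> i \<le> s \<Longrightarrow> 1 \<le> a i"
  proof -
    fix i :: nat assume "1 \<le> i" "i \<le> s"
    thus "1 \<le> a i" using mono[of 1 i] assms(3) by (cases "i = 1") auto
  qed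
  have AM: "a s \<notin> set mid" using setm mono by fastforce
  have pm: "\<forall>w\<in>set mid. 0 < w \<and> w < a s"
  proof
    fix w assume "w \<in> set mid"
    then obtain i where "1 \<le> i" "i < s" "w = a i" using setm by blast
    thus "0 < w \<and> w < a s" using mono[of i s] pos[of i] by auto
  qed
  have sm: "sum_list mid < a s" unfolding mid_def sum_mid using assms(8) .
  have ne: "mid \<noteq> []"
  proof -
    have "m 1 \<ge> 1" using assms(5)[of 1] assms(2) by simp
    hence "a 1 \<in> set mid" unfolding mid_def using assms(2) by (auto intro!: bexI[of _ 1])
    thus ?thesis by auto
  qed
  have smid: "sorted mid" unfolding mid_def by (rule sorted_mid) (use mono in auto)
  have main: "\<forall>xs. mset xs = mset xstar \<longrightarrow> qform xs \<le> qform xstar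
         \<and> (qform xs = qform xstar \<longrightarrow> xs = xstar \<or> xs = rev xstar)"
    using main_abstract[OF AM pm sm ne smid, of h] unfolding xstar_def mid_def by simp
  show ?thesis using ms main by simp
qed

end
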